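(* Let $n\geq2$ and let $A=(a_{i,j})$ be a nonnegative $2\times n$ matrix with $a_{2,k}=0$ for $2\leq k\leq n$. Let $A'=(a'_{i,j})$ be the $2\times n$ matrix with $a'_{1,1}=\sum_{k=1}^n a_{1,k}$, $a'_{1,k}=0$ for $2\le k\le n$, $a'_{2,1}=a_{2,1}-\sum_{k=2}^n a_{1,k}$, and $a'_{2,k}=a_{1,k}$ for $2\leq k\leq n$. If $\sum_{k=2}^n a_{1,k}\leq a_{2,1}\leq\sum_{k=1}^n a_{1,k}$, then $H(A)\geq H(A')$.
   Context: For a nonnegative matrix $A$, $H(A)=-\sum_{i,j}a_{i,j}\log a_{i,j}$ with the convention $0\log0=0$. *)

theory Defs
  imports Complex_Main
begin

definition xlogx :: "real \<Rightarrow> real" where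
  "xlogx x = (if x = 0 then 0 else x * ln x)"

definition H :: "nat \<Rightarrow> nat \<Rightarrow> (nat \<Rightarrow> nat \<Rightarrow> real) \<Rightarrow> real" where
  "H m n a = - (\<Sum>i\<in>{1..m}. \<Sum>j\<in>{1..n}. xlogx (a i j))"

end

theory Submission
  imports Defs "HOL-Analysis.Analysis"
begin

lemma xlnx_convex: "convex_on {0<..} (\<lambda>x::real. x * ln x)"
proof (rule convex_on_realI[where f'="\<lambda>x. ln x + 1"])
  show "connected ({0<..} :: real set)" by simp
  fix x :: real assume "x \<in> {0<..}"
  then show "((\<lambda>x. x * ln x) has_real_derivative ln x + 1) (at x)"
    by (auto intro!: derivative_eq_intros)
next
  fix x y :: real assume "x \<in> {0<..}" "y \<in> {0<..}" "x \<le> y"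
  then show "ln x + 1 \<le> ln y + 1" by simp
qed

lemma key:
  fixes u v p q :: real
  assumes "0 < u" "u \<le> p" "p \<le> v" "u \<le> q" "q \<le> v" "p + q = u + v"
  shows "p * ln p + q * ln q \<le> u * ln u + v * ln v"
proof (cases "u = v")
  case True
  then have "p = u" "q = u" using assms by auto
  then show ?thesis using True by simp
next
  case False
  then have uv: "u < v" using assms by simp
  define t where "t = (p - u) / (v - u)"
  have t0: "0 \<le> t" "t \<le> 1" using assms uv by (auto simp: t_def field_simps)
  have tv: "t * (v - u) = p - u" using uv by (simp add: t_def)
  have hp: "p = (1 - t) * u + t * v" using tv by (simp add: algebra_simps)
  have hq: "q = (1 - (1 - t)) * u + (1 - t) * v" using tv assms(6) by (simp add: algebra_simps)
  have uv0: "u \<in> {0<..}" "v \<in> {0<..}" using assms uv by auto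
  have c: "((1 - r) * u + r * v) * ln ((1 - r) * u + r * v) \<le> (1 - r) * (u * ln u) + r * (v * ln v)"
    if "0 \<le> r" "r \<le> 1" for r
    using convex_onD[OF xlnx_convex that uv0] by simp
  have 1: "p * ln p \<le> (1 - t) * (u * ln u) + t * (v * ln v)"
    using c[of t] t0 hp by simp
  have 2: "q * ln q \<le> (1 - (1 - t)) * (u * ln u) + (1 - t) * (v * ln v)"
    using c[of "1 - t"] t0 hq by simp
  show ?thesis using 1 2 by (simp add: algebra_simps)
qed

lemma xlogx_eq: "x \<ge> 0 \<Longrightarrow> xlogx x = x * ln x"
  by (simp add: xlogx_def)

lemma core:
  fixes x y s :: real
  assumes "0 \<le> x" "0 \<le> s" "s \<le> y" "y \<le> x + s"
  shows "xlogx x + xlogx y \<le> xlogx (x + s) + xlogx (y - s)"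
proof (cases "y = s")
  case True
  show ?thesis
  proof -
    have a: "xlogx x \<le> x * ln (x + s)"
      using assms by (cases "x = 0") (auto simp: xlogx_def intro!: mult_left_mono)
    have b: "xlogx y \<le> y * ln (x + s)"
      using assms by (cases "y = 0") (auto simp: xlogx_def intro!: mult_left_mono)
    have "xlogx (x + s) = (x + s) * ln (x + s)" using assms by (simp add: xlogx_eq)
    then show ?thesis using a b True by (simp add: xlogx_def algebra_simps)
  qed
next
  case False
  then have ys: "0 < y - s" using assms by simp
  have "x * ln x + y * ln y \<le> (y - s) * ln (y - s) + (x + s) * ln (x + s)"
    by (rule key) (use assms ys in auto)
  then show ?thesis using assms ys by (simp add: xlogx_eq)
qed

theorem lemma2p1:
  fixes n :: nat and a a' :: "nat \<Rightarrow> nat \<Rightarrow> real"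
  assumes hn: "n \<ge> 2"
    and nonneg: "\<And>i j. i \<in> {1..2} \<Longrightarrow> j \<in> {1..n} \<Longrightarrow> a i j \<ge> 0"
    and zero2: "\<And>k. k \<in> {2..n} \<Longrightarrow> a 2 k = 0"
    and a'11: "a' 1 1 = (\<Sum>k\<in>{1..n}. a 1 k)"
    and a'1k: "\<And>k. k \<in> {2..n} \<Longrightarrow> a' 1 k = 0"
    and a'21: "a' 2 1 = a 2 1 - (\<Sum>k\<in>{2..n}. a 1 k)"
    and a'2k: "\<And>k. k \<in> {2..n} \<Longrightarrow> a' 2 k = a 1 k"
    and lo: "(\<Sum>k\<in>{2..n}. a 1 k) \<le> a 2 1"
    and hi: "a 2 1 \<le> (\<Sum>k\<in>{1..n}. a 1 k)"
  shows "H 2 n a \<ge> H 2 n a'"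
proof -
  define s where "s = (\<Sum>k\<in>{2..n}. a 1 k)"
  have split: "{1..n} = insert 1 {2..n}" using hn by auto
  have sum1: "(\<Sum>k\<in>{1..n}. a 1 k) = a 1 1 + s"
    unfolding s_def split by simp
  have s0: "0 \<le> s" unfolding s_def by (rule sum_nonneg) (use nonneg in auto)
  have x0: "0 \<le> a 1 1" using nonneg hn by auto
  have two: "{1..2::nat} = {1,2}" by auto
  have Hs: "H 2 n b = - (xlogx (b 1 1) + (\<Sum>j\<in>{2..n}. xlogx (b 1 j))
     + xlogx (b 2 1) + (\<Sum>j\<in>{2..n}. xlogx (b 2 j)))" for b
    unfolding H_def two split by simp
  have e1: "(\<Sum>j\<in>{2..n}. xlogx (a 2 j)) = 0" using zero2 by (simp add: xlogx_def)
  have e2: "(\<Sum>j\<in>{2..n}. xlogx (a' 1 j)) = 0" using a'1k by (simp add: xlogx_def)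
  have e3: "(\<Sum>j\<in>{2..n}. xlogx (a' 2 j)) = (\<Sum>j\<in>{2..n}. xlogx (a 1 j))"
    using a'2k by simp
  have c: "xlogx (a 1 1) + xlogx (a 2 1) \<le> xlogx (a 1 1 + s) + xlogx (a 2 1 - s)"
    by (rule core) (use x0 s0 lo hi sum1 s_def in auto)
  show ?thesis unfolding Hs e1 e2 e3 a'11 a'21 sum1 s_def[symmetric]
    using c by simp
qed

end
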